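(* Let $K\geqslant 1$ and $f\in\mathrm{HQR}_K(\mathbb{U},\mathbb{S})$. Then $$d_{\mathbb{S}}(f(z_1),f(z_2))\leqslant K\, d_{\mathbb{U}}(z_1,z_2)\quad\text{for all } z_1,z_2\in\mathbb{U}.$$
   Context: $\mathbb{U}=\{z\in\mathbb{C}:|z|<1\}$, $\mathbb{S}=\{z\in\mathbb{C}:-1<\operatorname{Re} z<1\}$. For a hyperbolic domain $\Omega$ with density $\rho_\Omega$, $d_\Omega(z_1,z_2)=\inf_\gamma\int_\gamma\rho_\Omega(z)|dz|$ over $C^1$ curves in $\Omega$ joining $z_1$ to $z_2$; here $\rho_{\mathbb{U}}(z)=\frac{2}{1-|z|^2}$ and $\rho_{\mathbb{S}}(z)=\frac{\pi}{2}\big/\cos\left(\frac{\pi}{2}\operatorname{Re} z\right)$. For domains $D,G\subset\mathbb{C}$, $\mathrm{HQR}_K(D,G)$ denotes the class of complex-valued harmonic $C^1$ maps $f:D\to G$ that are sense-preserving $K$-quasiregular, i.e. $|f_z(z)|>|f_{\bar z}(z)|$ and $\frac{|f_z(z)|+|f_{\bar z}(z)|}{|f_z(z)|-|f_{\bar z}(z)|}\leqslant K$ for all $z\in D$. *)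

theory Defs
  imports "HOL-Analysis.Analysis"
begin

definition unit_disc :: "complex set" where
  "unit_disc = {z. cmod z < 1}"

definition strip_S :: "complex set" where
  "strip_S = {z. -1 < Re z \<and> Re z < 1}"

definition rho_U :: "complex \<Rightarrow> real" where
  "rho_U z = 2 / (1 - (cmod z)\<^sup>2)"

definition rho_S :: "complex \<Rightarrow> real" where
  "rho_S z = (pi / 2) / cos (pi / 2 * Re z)"

definition hyp_dist :: "complex set \<Rightarrow> (complex \<Rightarrow> real) \<Rightarrow> complex \<Rightarrow> complex \<Rightarrow> real" where
  "hyp_dist \<Omega> \<rho> z1 z2 =
     (INF \<gamma> \<in> {\<gamma>. \<gamma> C1_differentiable_on {0..1} \<and> \<gamma> ` {0..1} \<subseteq> \<Omega>
                  \<and> \<gamma> 0 = z1 \<and> \<gamma> 1 = z2}.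
        integral {0..1} (\<lambda>t. \<rho> (\<gamma> t) * cmod (vector_derivative \<gamma> (at t within {0..1}))))"

definition dx :: "(complex \<Rightarrow> complex) \<Rightarrow> complex \<Rightarrow> complex" where
  "dx f z = vector_derivative (\<lambda>t::real. f (z + of_real t)) (at 0)"

definition dy :: "(complex \<Rightarrow> complex) \<Rightarrow> complex \<Rightarrow> complex" where
  "dy f z = vector_derivative (\<lambda>t::real. f (z + \<i> * of_real t)) (at 0)"

definition dz :: "(complex \<Rightarrow> complex) \<Rightarrow> complex \<Rightarrow> complex" where
  "dz f z = (dx f z - \<i> * dy f z) / 2"

definition dzbar :: "(complex \<Rightarrow> complex) \<Rightarrow> complex \<Rightarrow> complex" where
  "dzbar f z = (dx f z + \<i> * dy f z) / 2"

definition harmonic_on :: "(complex \<Rightarrow> complex) \<Rightarrow> complex set \<Rightarrow> bool" where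
  "harmonic_on f D \<longleftrightarrow>
     (\<forall>z\<in>D. f differentiable (at z)) \<and>
     (\<forall>z\<in>D. dx f differentiable (at z) \<and> dy f differentiable (at z)) \<and>
     continuous_on D (dx (dx f)) \<and> continuous_on D (dy (dx f)) \<and>
     continuous_on D (dx (dy f)) \<and> continuous_on D (dy (dy f)) \<and>
     (\<forall>z\<in>D. dx (dx f) z + dy (dy f) z = 0)"

definition HQR :: "real \<Rightarrow> complex set \<Rightarrow> complex set \<Rightarrow> (complex \<Rightarrow> complex) set" where
  "HQR K D G = {f. harmonic_on f D \<and> f ` D \<subseteq> G \<and>
      continuous_on D (dx f) \<and> continuous_on D (dy f) \<and>
      (\<forall>z\<in>D. cmod (dz f z) > cmod (dzbar f z) \<and>
         (cmod (dz f z) + cmod (dzbar f z)) / (cmod (dz f z) - cmod (dzbar f z)) \<le> K)}"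

end

theory Submission
  imports Defs "HOL-Complex_Analysis.Complex_Analysis"
begin


lemma dir_deriv:
  assumes "(f has_derivative L) (at (w + of_real s * d))"
  shows "((\<lambda>t::real. f (w + of_real t * d)) has_vector_derivative L d) (at s)"
proof -
  have "((\<lambda>t::real. w + of_real t * d) has_derivative (\<lambda>t. of_real t * d)) (at s)"
  proof -
    have "bounded_linear (\<lambda>t::real. of_real t * d)"
      unfolding scaleR_conv_of_real[symmetric] by (rule bounded_linear_scaleR_left)
    then show ?thesis by (auto intro!: derivative_eq_intros bounded_linear_imp_has_derivative)
  qed
  from has_derivative_compose[OF this assms]
  have "((\<lambda>t::real. f (w + of_real t * d)) has_derivative (\<lambda>t. L (of_real t * d))) (at s)"
    by (simp add: o_def)
  moreover have "(\<lambda>t. L (of_real t * d)) = (\<lambda>t. t *\<^sub>R L d)"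
    using has_derivative_linear[OF assms]
    by (metis linear_scale scaleR_conv_of_real)
  ultimately show ?thesis by (simp add: has_vector_derivative_def)
qed

lemma dx_eq:
  assumes "(f has_derivative L) (at w)"
  shows "dx f w = L 1"
proof -
  have "((\<lambda>t::real. f (w + of_real t * 1)) has_vector_derivative L 1) (at 0)"
    by (rule dir_deriv) (use assms in simp)
  then show ?thesis unfolding dx_def by (simp add: vector_derivative_at)
qed

lemma dy_eq:
  assumes "(f has_derivative L) (at w)"
  shows "dy f w = L \<i>"
proof -
  have "((\<lambda>t::real. f (w + of_real t * \<i>)) has_vector_derivative L \<i>) (at 0)"
    by (rule dir_deriv) (use assms in simp)
  then show ?thesis unfolding dy_def by (simp add: vector_derivative_at mult.commute)
qed

lemma re_dx:
  assumes "f differentiable at (w + of_real s)"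
  shows "((\<lambda>t. Re (f (w + of_real t))) has_real_derivative Re (dx f (w + of_real s))) (at s)"
proof -
  obtain L where L: "(f has_derivative L) (at (w + of_real s))"
    using assms unfolding differentiable_def by blast
  have "((\<lambda>t::real. f (w + of_real t * 1)) has_vector_derivative L 1) (at s)"
    by (rule dir_deriv) (use L in simp)
  then have "((\<lambda>t::real. f (w + of_real t)) has_vector_derivative dx f (w + of_real s)) (at s)"
    using dx_eq[OF L] by simp
  then have "((\<lambda>t::real. Re (f (w + of_real t))) has_derivative (\<lambda>x. Re (x *\<^sub>R dx f (w + of_real s)))) (at s)"
    unfolding has_vector_derivative_def by (rule has_derivative_Re)
  moreover have "(\<lambda>x. x * c) = (*) c" for c :: real by (rule ext) simp
  ultimately show ?thesis
    by (simp add: has_field_derivative_def)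
qed

lemma re_dy:
  assumes "f differentiable at (w + \<i> * of_real s)"
  shows "((\<lambda>t. Re (f (w + \<i> * of_real t))) has_real_derivative Re (dy f (w + \<i> * of_real s))) (at s)"
proof -
  obtain L where L: "(f has_derivative L) (at (w + \<i> * of_real s))"
    using assms unfolding differentiable_def by blast
  have "((\<lambda>t::real. f (w + of_real t * \<i>)) has_vector_derivative L \<i>) (at s)"
    by (rule dir_deriv) (use L in \<open>simp add: mult.commute\<close>)
  then have "((\<lambda>t::real. f (w + \<i> * of_real t)) has_vector_derivative dy f (w + \<i> * of_real s)) (at s)"
    using dy_eq[OF L] by (simp add: mult.commute)
  then have "((\<lambda>t::real. Re (f (w + \<i> * of_real t))) has_derivative (\<lambda>x. Re (x *\<^sub>R dy f (w + \<i> * of_real s)))) (at s)"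
    unfolding has_vector_derivative_def by (rule has_derivative_Re)
  moreover have "(\<lambda>x. x * c) = (*) c" for c :: real by (rule ext) simp
  ultimately show ?thesis
    by (simp add: has_field_derivative_def)
qed

lemma pt_in_ball:
  fixes s t h d :: real
  assumes "0 \<le> s" "s \<le> h" "0 \<le> t" "t \<le> h" "3 * h = d" "0 < h"
  shows "z + of_real s + \<i> * of_real t \<in> ball z d"
proof -
  have "dist z (z + (of_real s + \<i> * of_real t)) = cmod (of_real s + \<i> * of_real t)"
    by (metis add_diff_cancel_left' dist_commute dist_norm)
  then have "dist z (z + of_real s + \<i> * of_real t) = cmod (of_real s + \<i> * of_real t)"
    by (simp add: add.assoc)
  also have "\<dots> \<le> cmod (of_real s) + cmod (\<i> * of_real t)" by (rule norm_triangle_ineq)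
  also have "\<dots> = s + t" using assms by (simp add: norm_mult)
  finally show ?thesis using assms by simp
qed

lemma mixed_sym:
  assumes D: "open D" "z \<in> D"
   and d0: "\<And>w. w \<in> D \<Longrightarrow> f differentiable at w"
   and d1: "\<And>w. w \<in> D \<Longrightarrow> dx f differentiable at w"
   and d2: "\<And>w. w \<in> D \<Longrightarrow> dy f differentiable at w"
   and c1: "continuous_on D (dy (dx f))" and c2: "continuous_on D (dx (dy f))"
  shows "Re (dy (dx f) z) = Re (dx (dy f) z)"
proof (rule ccontr)
  define a where "a = Re (dy (dx f) z)"
  define b where "b = Re (dx (dy f) z)"
  assume "\<not> Re (dy (dx f) z) = Re (dx (dy f) z)"
  hence ne: "a \<noteq> b" by (simp add: a_def b_def)
  define e where "e = \<bar>a - b\<bar> / 2"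
  have e: "e > 0" using ne by (simp add: e_def)
  have "continuous (at z) (dy (dx f))" using c1 D continuous_on_eq_continuous_at by blast
  then obtain r1 where r1: "r1 > 0" "\<And>w. dist w z < r1 \<Longrightarrow> dist (dy (dx f) w) (dy (dx f) z) < e"
    using e unfolding continuous_at_eps_delta by metis
  have "continuous (at z) (dx (dy f))" using c2 D continuous_on_eq_continuous_at by blast
  then obtain r2 where r2: "r2 > 0" "\<And>w. dist w z < r2 \<Longrightarrow> dist (dx (dy f) w) (dx (dy f) z) < e"
    using e unfolding continuous_at_eps_delta by metis
  obtain r3 where r3: "r3 > 0" "ball z r3 \<subseteq> D" using D openE by blast
  define d where "d = min r1 (min r2 r3)"
  have d: "d > 0" "d \<le> r1" "d \<le> r2" "d \<le> r3" using r1 r2 r3 by (auto simp: d_def)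
  define h where "h = d / 3"
  have h: "h > 0" "3 * h = d" using d by (auto simp: h_def)
  have inD: "z + of_real s + \<i> * of_real t \<in> D" if "0 \<le> s" "s \<le> h" "0 \<le> t" "t \<le> h" for s t
    using pt_in_ball[OF that h(2) h(1), of z] r3 d by auto
  have inB: "dist (z + of_real s + \<i> * of_real t) z < d" if "0 \<le> s" "s \<le> h" "0 \<le> t" "t \<le> h" for s t
    using pt_in_ball[OF that h(2) h(1), of z] by (simp add: dist_commute)
  define A where "A t = Re (f ((z + \<i> * of_real h) + of_real t)) - Re (f (z + of_real t))" for t
  have "\<exists>\<xi>. 0 < \<xi> \<and> \<xi> < h \<and> A h - A 0 = (h - 0) *
      (Re (dx f ((z + \<i> * of_real h) + of_real \<xi>)) - Re (dx f (z + of_real \<xi>)))"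
    unfolding A_def
  proof (rule MVT2[OF h(1)])
    fix x :: real assume x: "0 \<le> x" "x \<le> h"
    have i1: "(z + \<i> * of_real h) + of_real x \<in> D" using inD[of x h] x h by (simp add: add_ac)
    have i2: "z + of_real x \<in> D" using inD[of x 0] x h by simp
    show "((\<lambda>t. Re (f ((z + \<i> * of_real h) + of_real t)) - Re (f (z + of_real t))) has_real_derivative
       Re (dx f ((z + \<i> * of_real h) + of_real x)) - Re (dx f (z + of_real x))) (at x)"
      by (intro DERIV_diff re_dx d0 i1 i2)
  qed
  then obtain \<xi> where xi: "0 < \<xi>" "\<xi> < h" and Aeq: "A h - A 0 = h *
      (Re (dx f ((z + \<i> * of_real h) + of_real \<xi>)) - Re (dx f (z + of_real \<xi>)))" by auto
  have "\<exists>\<eta>. 0 < \<eta> \<and> \<eta> < h \<and> Re (dx f ((z + of_real \<xi>) + \<i> * of_real h)) - Re (dx f ((z + of_real \<xi>) + \<i> * of_real 0))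
     = (h - 0) * Re (dy (dx f) ((z + of_real \<xi>) + \<i> * of_real \<eta>))"
  proof (rule MVT2[OF h(1)])
    fix x :: real assume x: "0 \<le> x" "x \<le> h"
    show "((\<lambda>t. Re (dx f ((z + of_real \<xi>) + \<i> * of_real t))) has_real_derivative
       Re (dy (dx f) ((z + of_real \<xi>) + \<i> * of_real x))) (at x)"
      by (intro re_dy d1 inD) (use x xi in auto)
  qed
  then obtain \<eta> where eta: "0 < \<eta>" "\<eta> < h" and Beq:
    "Re (dx f ((z + of_real \<xi>) + \<i> * of_real h)) - Re (dx f ((z + of_real \<xi>) + \<i> * of_real 0))
     = h * Re (dy (dx f) ((z + of_real \<xi>) + \<i> * of_real \<eta>))" by auto
  have e1: "(z + \<i> * of_real h) + of_real \<xi> = (z + of_real \<xi>) + \<i> * of_real h" by (simp add: algebra_simps)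
  have "Re (dx f ((z + \<i> * of_real h) + of_real \<xi>)) = Re (dx f ((z + of_real \<xi>) + \<i> * of_real h))" by (simp only: e1)
  then have Delta1: "A h - A 0 = h * (h * Re (dy (dx f) (z + of_real \<xi> + \<i> * of_real \<eta>)))"
    using Aeq Beq by simp
  define C where "C t = Re (f ((z + of_real h) + \<i> * of_real t)) - Re (f (z + \<i> * of_real t))" for t
  have "\<exists>\<eta>. 0 < \<eta> \<and> \<eta> < h \<and> C h - C 0 = (h - 0) *
      (Re (dy f ((z + of_real h) + \<i> * of_real \<eta>)) - Re (dy f (z + \<i> * of_real \<eta>)))"
    unfolding C_def
  proof (rule MVT2[OF h(1)])
    fix x :: real assume x: "0 \<le> x" "x \<le> h"
    have i1: "(z + of_real h) + \<i> * of_real x \<in> D" using inD[of h x] x h by simp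
    have i2: "z + \<i> * of_real x \<in> D" using inD[of 0 x] x h by simp
    show "((\<lambda>t. Re (f ((z + of_real h) + \<i> * of_real t)) - Re (f (z + \<i> * of_real t))) has_real_derivative
       Re (dy f ((z + of_real h) + \<i> * of_real x)) - Re (dy f (z + \<i> * of_real x))) (at x)"
      by (intro DERIV_diff re_dy d0 i1 i2)
  qed
  then obtain \<eta>' where eta': "0 < \<eta>'" "\<eta>' < h" and Ceq: "C h - C 0 = h *
      (Re (dy f ((z + of_real h) + \<i> * of_real \<eta>')) - Re (dy f (z + \<i> * of_real \<eta>')))" by auto
  have "\<exists>\<xi>. 0 < \<xi> \<and> \<xi> < h \<and> Re (dy f ((z + \<i> * of_real \<eta>') + of_real h)) - Re (dy f ((z + \<i> * of_real \<eta>') + of_real 0))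
     = (h - 0) * Re (dx (dy f) ((z + \<i> * of_real \<eta>') + of_real \<xi>))"
  proof (rule MVT2[OF h(1)])
    fix x :: real assume x: "0 \<le> x" "x \<le> h"
    have i1: "(z + \<i> * of_real \<eta>') + of_real x \<in> D" using inD[of x \<eta>'] x eta' by (simp add: add_ac)
    show "((\<lambda>t. Re (dy f ((z + \<i> * of_real \<eta>') + of_real t))) has_real_derivative
       Re (dx (dy f) ((z + \<i> * of_real \<eta>') + of_real x))) (at x)"
      by (intro re_dx d2 i1)
  qed
  then obtain \<xi>' where xi': "0 < \<xi>'" "\<xi>' < h" and Eeq:
    "Re (dy f ((z + \<i> * of_real \<eta>') + of_real h)) - Re (dy f ((z + \<i> * of_real \<eta>') + of_real 0))
     = h * Re (dx (dy f) ((z + \<i> * of_real \<eta>') + of_real \<xi>'))" by auto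
  have e2: "(z + of_real h) + \<i> * of_real \<eta>' = (z + \<i> * of_real \<eta>') + of_real h" by (simp add: algebra_simps)
  have e3: "(z + \<i> * of_real \<eta>') + of_real \<xi>' = z + of_real \<xi>' + \<i> * of_real \<eta>'" by (simp add: algebra_simps)
  have "Re (dy f ((z + of_real h) + \<i> * of_real \<eta>')) = Re (dy f ((z + \<i> * of_real \<eta>') + of_real h))"
    by (simp only: e2)
  moreover have "Re (dx (dy f) ((z + \<i> * of_real \<eta>') + of_real \<xi>')) = Re (dx (dy f) (z + of_real \<xi>' + \<i> * of_real \<eta>'))"
    by (simp only: e3)
  ultimately have Delta2: "C h - C 0 = h * (h * Re (dx (dy f) (z + of_real \<xi>' + \<i> * of_real \<eta>')))"
    using Ceq Eeq by simp
  have e4: "(z + \<i> * of_real h) + of_real h = (z + of_real h) + \<i> * of_real h" by (simp add: algebra_simps)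
  have "A h - A 0 = C h - C 0" unfolding A_def C_def by (simp only: e4) simp
  with Delta1 Delta2 h have eq: "Re (dy (dx f) (z + of_real \<xi> + \<i> * of_real \<eta>)) = Re (dx (dy f) (z + of_real \<xi>' + \<i> * of_real \<eta>'))"
    by simp
  have "dist (dy (dx f) (z + of_real \<xi> + \<i> * of_real \<eta>)) (dy (dx f) z) < e"
    using r1(2) inB[of \<xi> \<eta>] xi eta d by auto
  then have q1: "\<bar>Re (dy (dx f) (z + of_real \<xi> + \<i> * of_real \<eta>)) - a\<bar> < e"
    unfolding a_def dist_norm by (metis abs_Re_le_cmod minus_complex.sel(1) order.strict_trans1)
  have "dist (dx (dy f) (z + of_real \<xi>' + \<i> * of_real \<eta>')) (dx (dy f) z) < e"
    using r2(2) inB[of \<xi>' \<eta>'] xi' eta' d by auto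
  then have q2: "\<bar>Re (dx (dy f) (z + of_real \<xi>' + \<i> * of_real \<eta>')) - b\<bar> < e"
    unfolding b_def dist_norm by (metis abs_Re_le_cmod minus_complex.sel(1) order.strict_trans1)
  from q1 q2 eq have "\<bar>a - b\<bar> < 2 * e" by linarith
  then show False by (simp add: e_def)
qed

lemma lin_decomp:
  assumes "linear L"
  shows "L v = of_real (Re v) * L 1 + of_real (Im v) * L \<i>"
proof -
  have "v = Re v *\<^sub>R 1 + Im v *\<^sub>R \<i>"
    by (simp add: complex_eq_iff)
  then have "L v = L (Re v *\<^sub>R 1 + Im v *\<^sub>R \<i>)" by simp
  also have "\<dots> = Re v *\<^sub>R L 1 + Im v *\<^sub>R L \<i>"
    using assms by (simp add: linear_add linear_scale)
  finally show ?thesis by (simp add: scaleR_conv_of_real)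
qed

lemma deriv_decomp:
  assumes "(f has_derivative L) (at w)"
  shows "L v = of_real (Re v) * dx f w + of_real (Im v) * dy f w"
  unfolding dx_eq[OF assms] dy_eq[OF assms] by (rule lin_decomp[OF has_derivative_linear[OF assms]])

definition phi :: "(complex \<Rightarrow> complex) \<Rightarrow> complex \<Rightarrow> complex" where
  "phi f z = of_real (Re (dx f z)) - \<i> * of_real (Re (dy f z))"

lemma phi_deriv:
  assumes D: "open D" and hf: "harmonic_on f D" and z: "z \<in> D"
  shows "(phi f has_field_derivative (of_real (Re (dx (dx f) z)) - \<i> * of_real (Re (dx (dy f) z)))) (at z)"
proof -
  have H: "\<forall>z\<in>D. f differentiable (at z)" "\<forall>z\<in>D. dx f differentiable (at z) \<and> dy f differentiable (at z)"
     "continuous_on D (dy (dx f))" "continuous_on D (dx (dy f))" "\<forall>z\<in>D. dx (dx f) z + dy (dy f) z = 0"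
    using hf unfolding harmonic_on_def by auto
  obtain L1 where L1: "(dx f has_derivative L1) (at z)" using H(2) z unfolding differentiable_def by blast
  obtain L2 where L2: "(dy f has_derivative L2) (at z)" using H(2) z unfolding differentiable_def by blast
  have sym: "Re (dy (dx f) z) = Re (dx (dy f) z)"
    by (rule mixed_sym[OF D z]) (use H in auto)
  have lap: "Re (dx (dx f) z) + Re (dy (dy f) z) = 0"
    using H(5) z by (metis plus_complex.sel(1) zero_complex.sel(1))
  have "(phi f has_derivative (\<lambda>v. of_real (Re (L1 v)) - \<i> * of_real (Re (L2 v)))) (at z)"
    unfolding phi_def[abs_def] by (intro derivative_intros L1 L2)
  moreover have "(\<lambda>v. of_real (Re (L1 v)) - \<i> * of_real (Re (L2 v))) =
     (\<lambda>v. (of_real (Re (dx (dx f) z)) - \<i> * of_real (Re (dx (dy f) z))) * v)"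
  proof
    fix v
    show "of_real (Re (L1 v)) - \<i> * of_real (Re (L2 v)) =
      (of_real (Re (dx (dx f) z)) - \<i> * of_real (Re (dx (dy f) z))) * v"
      unfolding deriv_decomp[OF L1, of v] deriv_decomp[OF L2, of v]
      using sym lap[unfolded add_eq_0_iff] by (simp add: complex_eq_iff algebra_simps)
  qed
  ultimately show ?thesis by (simp add: has_field_derivative_def)
qed

lemma phi_holo:
  assumes D: "open D" and hf: "harmonic_on f D"
  shows "phi f holomorphic_on D"
  unfolding holomorphic_on_def
  using phi_deriv[OF D hf] field_differentiable_at_within field_differentiable_def by blast

lemma exists_F:
  assumes hf: "harmonic_on f (ball 0 1)"
  obtains F where "\<And>z. z \<in> ball 0 1 \<Longrightarrow> (F has_field_derivative phi f z) (at z)"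
    "\<And>z. z \<in> ball 0 1 \<Longrightarrow> Re (F z) = Re (f z)"
proof -
  obtain g where g: "\<And>x. x \<in> ball 0 1 \<Longrightarrow> (g has_field_derivative phi f x) (at x within ball 0 1)"
    using holomorphic_convex_primitive'[OF convex_ball open_ball phi_holo[OF open_ball hf]] by blast
  have g': "(g has_field_derivative phi f x) (at x)" if "x \<in> ball 0 1" for x
    using g[OF that] at_within_open[OF that open_ball] by simp
  have fd: "f differentiable at x" if "x \<in> ball 0 1" for x
    using hf that unfolding harmonic_on_def by auto
  have kd: "((\<lambda>z. Re (g z) - Re (f z)) has_derivative (\<lambda>h. 0)) (at x within ball 0 1)"
    if x: "x \<in> ball 0 1" for x
  proof -
    obtain Lf where Lf: "(f has_derivative Lf) (at x)" using fd[OF x] unfolding differentiable_def by blast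
    have "((\<lambda>z. Re (g z) - Re (f z)) has_derivative (\<lambda>v. Re (phi f x * v) - Re (Lf v))) (at x)"
      by (intro derivative_intros Lf has_field_derivative_imp_has_derivative[OF g'[OF x]])
    moreover have "(\<lambda>v. Re (phi f x * v) - Re (Lf v)) = (\<lambda>v. 0)"
    proof
      fix v show "Re (phi f x * v) - Re (Lf v) = 0"
        unfolding deriv_decomp[OF Lf, of v] phi_def by (simp add: algebra_simps)
    qed
    ultimately show ?thesis by (simp add: has_derivative_at_withinI)
  qed
  obtain c where c: "\<And>x. x \<in> ball 0 1 \<Longrightarrow> Re (g x) - Re (f x) = c"
    using has_derivative_zero_constant[OF convex_ball kd] by blast
  show ?thesis
  proof (rule that[of "\<lambda>z. g z - of_real c"])
    fix z assume z: "z \<in> ball (0::complex) 1"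
    show "((\<lambda>z. g z - of_real c) has_field_derivative phi f z) (at z)"
      using g'[OF z] by (auto intro!: derivative_eq_intros)
    show "Re (g z - of_real c) = Re (f z)" using c[OF z] by simp
  qed
qed

lemma Moeb_eq: "Moebius_function 0 w z = (z - w) / (1 - cnj w * z)"
  by (simp add: Moebius_function_def)

lemma schwarz_pick:
  assumes holG: "G holomorphic_on ball 0 1" and GB: "\<And>z. z \<in> ball 0 1 \<Longrightarrow> G z \<in> ball 0 1"
    and z0: "z0 \<in> ball 0 1"
  shows "cmod (deriv G z0) * (1 - (cmod z0)\<^sup>2) \<le> 1 - (cmod (G z0))\<^sup>2"
proof -
  define a where "a = G z0"
  have a: "cmod a < 1" using GB[OF z0] by (simp add: a_def)
  have z0n: "cmod z0 < 1" using z0 by simp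
  define N where "N = Moebius_function 0 (- z0)"
  define M where "M = Moebius_function 0 a"
  define H where "H = (\<lambda>\<zeta>. M (G (N \<zeta>)))"
  have N0: "N 0 = z0" by (simp add: N_def Moeb_eq)
  have NB: "N \<zeta> \<in> ball 0 1" if "\<zeta> \<in> ball 0 1" for \<zeta>
    using Moebius_function_norm_lt_1[of "-z0" \<zeta> 0] z0n that by (simp add: N_def)
  have holN: "N holomorphic_on ball 0 1" unfolding N_def
    by (rule Moebius_function_holomorphic) (use z0n in simp)
  have holM: "M holomorphic_on ball 0 1" unfolding M_def
    by (rule Moebius_function_holomorphic) (use a in simp)
  have holH: "H holomorphic_on ball 0 1"
  proof -
    have "(M \<circ> (G \<circ> N)) holomorphic_on ball 0 1"
      by (rule holomorphic_on_compose_gen[OF holomorphic_on_compose_gen[OF holN holG] holM])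
         (use NB GB in auto)
    then show ?thesis by (simp add: H_def o_def)
  qed
  have H0: "H 0 = 0" by (simp add: H_def N0 M_def a_def[symmetric] Moebius_function_eq_zero)
  have HB: "cmod (H z) < 1" if "cmod z < 1" for z
    unfolding H_def M_def using Moebius_function_norm_lt_1[OF a, of "G (N z)" 0] GB NB that by simp
  have "cmod (deriv H 0) \<le> 1"
    using Schwarz_Lemma(2)[OF holH H0 HB, of 0] by simp
  have e1: "1 - cnj a * a = of_real (1 - (cmod a)\<^sup>2)"
    using complex_norm_square[of a] by (simp add: mult.commute)
  have e2: "1 - z0 * cnj z0 = of_real (1 - (cmod z0)\<^sup>2)"
    using complex_norm_square[of z0] by simp
  have a2: "(cmod a)\<^sup>2 < 1" using a by (simp add: abs_square_less_1)
  have z2: "(cmod z0)\<^sup>2 < 1" using z0n by (simp add: abs_square_less_1)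
  have ca: "1 - cnj a * a \<noteq> 0" unfolding e1 using a2 by (simp only: of_real_eq_0_iff)
  have Nf: "N = (\<lambda>\<zeta>. (\<zeta> + z0) / (1 + cnj z0 * \<zeta>))"
    unfolding N_def by (rule ext) (simp add: Moeb_eq)
  have Mf: "M = (\<lambda>w. (w - a) / (1 - cnj a * w))"
    unfolding M_def by (rule ext) (simp add: Moeb_eq)
  have dN: "(N has_field_derivative (1 - z0 * cnj z0)) (at 0)"
    unfolding Nf by (auto intro!: derivative_eq_intros)
  have dM: "(M has_field_derivative (1 / (1 - cnj a * a))) (at a)"
    unfolding Mf using ca by (auto intro!: derivative_eq_intros simp: power2_eq_square)
  have dG: "(G has_field_derivative deriv G z0) (at (N 0))"
    unfolding N0 by (rule holomorphic_derivI[OF holG open_ball z0])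
  have "(M \<circ> (G \<circ> N) has_field_derivative (1 / (1 - cnj a * a)) * (deriv G z0 * (1 - z0 * cnj z0))) (at 0)"
    apply (rule DERIV_chain)
     apply (simp add: N0 a_def[symmetric] dM)
    by (rule DERIV_chain[OF dG dN])
  then have "deriv H 0 = (1 / (1 - cnj a * a)) * (deriv G z0 * (1 - z0 * cnj z0))"
    unfolding H_def by (intro DERIV_imp_deriv) (simp add: o_def)
  then have "deriv H 0 = (1 / of_real (1 - (cmod a)\<^sup>2)) * (deriv G z0 * of_real (1 - (cmod z0)\<^sup>2))"
    unfolding e1 e2 .
  then have "cmod (deriv H 0) = (1 / \<bar>1 - (cmod a)\<^sup>2\<bar>) * (cmod (deriv G z0) * \<bar>1 - (cmod z0)\<^sup>2\<bar>)"
    by (simp only: norm_mult norm_divide norm_of_real norm_one)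
  then have "cmod (deriv G z0) * (1 - (cmod z0)\<^sup>2) / (1 - (cmod a)\<^sup>2) \<le> 1"
    using \<open>cmod (deriv H 0) \<le> 1\<close> a2 z2 by simp
  then show ?thesis using a2 by (simp add: a_def divide_le_eq)
qed



definition EE :: "complex \<Rightarrow> complex" where
  "EE w = exp (\<i> * of_real (pi / 2) * w)"

definition Phi :: "complex \<Rightarrow> complex" where
  "Phi w = (EE w - 1) / (EE w + 1)"

definition Phi' :: "complex \<Rightarrow> complex" where
  "Phi' w = \<i> * of_real pi * EE w / (EE w + 1)\<^sup>2"

lemma cos_strip_pos:
  assumes "-1 < Re w" "Re w < 1"
  shows "cos (pi / 2 * Re w) > 0"
proof -
  have "pi * (-1) < pi * Re w" by (rule mult_strict_left_mono) (use assms pi_gt_zero in auto)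
  moreover have "pi * Re w < pi * 1" by (rule mult_strict_left_mono) (use assms pi_gt_zero in auto)
  ultimately show ?thesis by (intro cos_gt_zero_pi) auto
qed

lemma ReEE:
  "Re (EE w) = cmod (EE w) * cos (pi / 2 * Re w)"
  by (simp add: EE_def Re_exp)

lemma ReEE_pos:
  assumes "-1 < Re w" "Re w < 1"
  shows "Re (EE w) > 0"
  unfolding ReEE using cos_strip_pos[OF assms] by (simp add: EE_def)

lemma EE1_nz:
  assumes "-1 < Re w" "Re w < 1"
  shows "EE w + 1 \<noteq> 0"
proof
  assume "EE w + 1 = 0"
  then have "Re (EE w + 1) = 0" by simp
  then have "Re (EE w) = -1" by simp
  then show False using ReEE_pos[OF assms] by simp
qed

lemma alg1: "(A * (E + 1) - (E - 1) * A) = 2 * (A::complex)"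
  by (simp add: algebra_simps)

lemma Phi_deriv:
  assumes "-1 < Re w" "Re w < 1"
  shows "(Phi has_field_derivative Phi' w) (at w)"
proof -
  have nz: "EE w + 1 \<noteq> 0" by (rule EE1_nz[OF assms])
  have d1: "((\<lambda>w. \<i> * of_real (pi / 2) * w) has_field_derivative \<i> * of_real (pi / 2)) (at w)"
    by (rule DERIV_cmult_Id)
  have dE: "(EE has_field_derivative exp (\<i> * of_real (pi / 2) * w) * (\<i> * of_real (pi / 2))) (at w)"
    unfolding EE_def[abs_def] by (rule DERIV_chain'[OF d1 DERIV_exp])
  define A where "A = exp (\<i> * of_real (pi / 2) * w) * (\<i> * of_real (pi / 2))"
  have "((\<lambda>w. (EE w - 1) / (EE w + 1)) has_field_derivative
     (A * (EE w + 1) - (EE w - 1) * A) / ((EE w + 1) * (EE w + 1))) (at w)"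
  proof -
    have a1: "((\<lambda>x. EE x - 1) has_field_derivative A) (at w)"
      using DERIV_diff[OF dE DERIV_const[of 1]] unfolding A_def by simp
    have a2: "((\<lambda>x. EE x + 1) has_field_derivative A) (at w)"
      using DERIV_add[OF dE DERIV_const[of 1]] unfolding A_def by simp
    show ?thesis using DERIV_divide[OF a1 a2] nz by simp
  qed
  moreover have "2 * A = \<i> * of_real pi * EE w"
    unfolding A_def EE_def by simp
  ultimately show ?thesis unfolding Phi_def[abs_def] Phi'_def alg1 power2_eq_square by simp
qed

lemma alg2:
  fixes n x e p :: real
  assumes "n > 0" "x > 0" "e > 0"
  shows "(p / 2) / (x / e) = 2 * (p * e / n) / (4 * x / n)"
  using assms by (simp add: field_simps)

lemma Phi_facts:
  assumes "-1 < Re w" "Re w < 1"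
  shows "cmod (Phi w) < 1" and "rho_S w = 2 * cmod (Phi' w) / (1 - (cmod (Phi w))\<^sup>2)"
proof -
  define x where "x = Re (EE w)"
  define y where "y = Im (EE w)"
  define n where "n = (x + 1)\<^sup>2 + y\<^sup>2"
  have xpos: "x > 0" using ReEE_pos[OF assms] by (simp add: x_def)
  have npos: "n > 0" using xpos unfolding n_def by (simp add: add_pos_nonneg)
  have n1: "(cmod (EE w + 1))\<^sup>2 = n" unfolding cmod_power2 n_def x_def y_def by simp
  have n2: "(cmod (EE w - 1))\<^sup>2 = (x - 1)\<^sup>2 + y\<^sup>2" unfolding cmod_power2 x_def y_def by simp
  have P2: "(cmod (Phi w))\<^sup>2 = ((x - 1)\<^sup>2 + y\<^sup>2) / n"
    unfolding Phi_def norm_divide power_divide n1 n2 ..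
  have nd: "n - ((x - 1)\<^sup>2 + y\<^sup>2) = 4 * x" unfolding n_def by (simp add: power2_eq_square algebra_simps)
  have "1 - ((x - 1)\<^sup>2 + y\<^sup>2) / n = (n - ((x - 1)\<^sup>2 + y\<^sup>2)) / n"
    using npos by (simp add: diff_divide_distrib)
  then have 1: "1 - (cmod (Phi w))\<^sup>2 = 4 * x / n" unfolding P2 nd .
  have "4 * x / n > 0" using xpos npos by simp
  then have "(cmod (Phi w))\<^sup>2 < 1" using 1 by linarith
  then show "cmod (Phi w) < 1" by (simp add: abs_square_less_1)
  have EEn: "cmod (EE w) > 0" by (simp add: EE_def)
  have Pn: "cmod (Phi' w) = pi * cmod (EE w) / n"
    unfolding Phi'_def norm_divide norm_mult norm_power n1 by simp
  have c: "cos (pi / 2 * Re w) = x / cmod (EE w)" using ReEE[of w] EEn by (simp add: x_def)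
  show "rho_S w = 2 * cmod (Phi' w) / (1 - (cmod (Phi w))\<^sup>2)"
    unfolding 1 Pn rho_S_def c by (rule alg2[OF npos xpos EEn])
qed

lemma alg3:
  fixes p q :: real
  assumes "p < 1" "q < 1"
  shows "2 * ((1 - p) / (1 - q)) / (1 - p) = 2 / (1 - q)"
proof -
  have *: "2 * (a / b) / a = 2 / b" if "a \<noteq> 0" "b \<noteq> 0" for a b :: real
    using that by (simp add: field_simps)
  show ?thesis by (rule *) (use assms in auto)
qed

lemma unit_disc_ball: "unit_disc = ball 0 1"
  by (auto simp: unit_disc_def)

lemma holo_of_deriv:
  assumes "\<And>z. z \<in> S \<Longrightarrow> (g has_field_derivative g' z) (at z)"
  shows "g holomorphic_on S"
  unfolding holomorphic_on_def field_differentiable_def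
  using assms has_field_derivative_at_within by blast

lemma phi_eq: "phi f z = dz f z + cnj (dzbar f z)"
  unfolding phi_def dz_def dzbar_def by (simp add: complex_eq_iff field_simps)

lemma pointwise_bound:
  assumes K: "K \<ge> 1" and f: "f \<in> HQR K unit_disc strip_S" and z: "z \<in> unit_disc"
  shows "rho_S (f z) * (cmod (dz f z) + cmod (dzbar f z)) \<le> K * rho_U z"
proof -
  have hf: "harmonic_on f (ball 0 1)" and fS: "f ` ball 0 1 \<subseteq> strip_S"
    and qr: "\<forall>z\<in>ball 0 1. cmod (dz f z) > cmod (dzbar f z) \<and>
         (cmod (dz f z) + cmod (dzbar f z)) / (cmod (dz f z) - cmod (dzbar f z)) \<le> K"
    using f unfolding HQR_def unit_disc_ball by auto
  have zb: "z \<in> ball 0 1" using z unit_disc_ball by simp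
  obtain F where dF: "\<And>z. z \<in> ball 0 1 \<Longrightarrow> (F has_field_derivative phi f z) (at z)"
    and ReF: "\<And>z. z \<in> ball 0 1 \<Longrightarrow> Re (F z) = Re (f z)"
    using exists_F[OF hf] by blast
  have FS: "-1 < Re (F w) \<and> Re (F w) < 1" if "w \<in> ball 0 1" for w
  proof -
    have "f w \<in> strip_S" using fS that by auto
    then show ?thesis using ReF[OF that] by (simp add: strip_S_def)
  qed
  define G where "G = Phi \<circ> F"
  have dG: "(G has_field_derivative Phi' (F w) * phi f w) (at w)" if "w \<in> ball 0 1" for w
    unfolding G_def by (rule DERIV_chain[OF Phi_deriv dF[OF that]]) (use FS[OF that] in auto)
  have holG: "G holomorphic_on ball 0 1" by (rule holo_of_deriv[OF dG])
  have GB: "G w \<in> ball 0 1" if "w \<in> ball 0 1" for w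
    using Phi_facts(1)[of "F w"] FS[OF that] by (simp add: G_def)
  have derG: "deriv G z = Phi' (F z) * phi f z" by (rule DERIV_imp_deriv[OF dG[OF zb]])
  have SP: "cmod (Phi' (F z)) * cmod (phi f z) * (1 - (cmod z)\<^sup>2) \<le> 1 - (cmod (Phi (F z)))\<^sup>2"
    using schwarz_pick[OF holG GB zb] unfolding derG by (simp add: G_def norm_mult)
  have rhoF: "rho_S (F z) = 2 * cmod (Phi' (F z)) / (1 - (cmod (Phi (F z)))\<^sup>2)"
    using Phi_facts(2)[of "F z"] FS[OF zb] by auto
  have rhoeq: "rho_S (f z) = rho_S (F z)" unfolding rho_S_def using ReF[OF zb] by simp
  have Pl: "cmod (Phi (F z)) < 1" using Phi_facts(1)[of "F z"] FS[OF zb] by auto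
  have P2: "(cmod (Phi (F z)))\<^sup>2 < 1" using Pl by (simp add: abs_square_less_1)
  have z2: "(cmod z)\<^sup>2 < 1" using zb by (simp add: abs_square_less_1)
  have "rho_S (f z) * cmod (phi f z) \<le> rho_U z"
  proof -
    have "rho_S (f z) * cmod (phi f z) = 2 * (cmod (Phi' (F z)) * cmod (phi f z)) / (1 - (cmod (Phi (F z)))\<^sup>2)"
      unfolding rhoeq rhoF by simp
    also have "\<dots> \<le> 2 * ((1 - (cmod (Phi (F z)))\<^sup>2) / (1 - (cmod z)\<^sup>2)) / (1 - (cmod (Phi (F z)))\<^sup>2)"
    proof -
      have "cmod (Phi' (F z)) * cmod (phi f z) \<le> (1 - (cmod (Phi (F z)))\<^sup>2) / (1 - (cmod z)\<^sup>2)"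
        using SP z2 by (simp add: le_divide_eq)
      then show ?thesis using P2 by (intro divide_right_mono mult_left_mono) auto
    qed
    also have "\<dots> = rho_U z" unfolding rho_U_def using alg3[OF P2 z2] .
    finally show ?thesis .
  qed
  moreover have "cmod (dz f z) + cmod (dzbar f z) \<le> K * cmod (phi f z)"
  proof -
    have q: "cmod (dz f z) > cmod (dzbar f z)"
      "(cmod (dz f z) + cmod (dzbar f z)) / (cmod (dz f z) - cmod (dzbar f z)) \<le> K"
      using qr zb by auto
    then have "cmod (dz f z) + cmod (dzbar f z) \<le> K * (cmod (dz f z) - cmod (dzbar f z))"
      by (simp add: divide_le_eq)
    moreover have "cmod (dz f z) \<le> cmod (phi f z) + cmod (dzbar f z)"
    proof -
      have "dz f z = phi f z - cnj (dzbar f z)" using phi_eq[of f z] by simp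
      then have "cmod (dz f z) \<le> cmod (phi f z) + cmod (cnj (dzbar f z))"
        by (metis norm_triangle_ineq4)
      then show ?thesis by simp
    qed
    ultimately have A: "cmod (dz f z) + cmod (dzbar f z) \<le> K * (cmod (dz f z) - cmod (dzbar f z))"
      and B: "cmod (dz f z) - cmod (dzbar f z) \<le> cmod (phi f z)" by linarith+
    have "K * (cmod (dz f z) - cmod (dzbar f z)) \<le> K * cmod (phi f z)"
      by (rule mult_left_mono[OF B]) (use K in auto)
    then show ?thesis using A by linarith
  qed
  moreover have "rho_S (f z) > 0"
  proof -
    have "cos (pi / 2 * Re (f z)) > 0" using cos_strip_pos[of "F z"] FS[OF zb] ReF[OF zb] by simp
    then show ?thesis unfolding rho_S_def by simp
  qed
  ultimately have r1: "rho_S (f z) * cmod (phi f z) \<le> rho_U z"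
    and r2: "cmod (dz f z) + cmod (dzbar f z) \<le> K * cmod (phi f z)" and r3: "rho_S (f z) > 0" by blast+
  have "rho_S (f z) * (cmod (dz f z) + cmod (dzbar f z)) \<le> rho_S (f z) * (K * cmod (phi f z))"
    by (rule mult_left_mono[OF r2]) (use r3 in auto)
  also have "\<dots> = K * (rho_S (f z) * cmod (phi f z))" by simp
  also have "\<dots> \<le> K * rho_U z" by (rule mult_left_mono[OF r1]) (use K in auto)
  finally show ?thesis .
qed

lemma lin_dz: "of_real (Re v) * dx f w + of_real (Im v) * dy f w = dz f w * v + dzbar f w * cnj v"
  unfolding dz_def dzbar_def by (simp add: complex_eq_iff field_simps)

lemma norm_lin_le: "cmod (of_real (Re v) * dx f w + of_real (Im v) * dy f w) \<le> (cmod (dz f w) + cmod (dzbar f w)) * cmod v"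
proof -
  have "cmod (dz f w * v + dzbar f w * cnj v) \<le> cmod (dz f w * v) + cmod (dzbar f w * cnj v)"
    by (rule norm_triangle_ineq)
  also have "\<dots> = (cmod (dz f w) + cmod (dzbar f w)) * cmod v" by (simp add: norm_mult algebra_simps)
  finally show ?thesis unfolding lin_dz .
qed

lemma cont_rho_S: "continuous_on strip_S rho_S"
proof -
  have "cos (pi / 2 * Re z) \<noteq> 0" if "z \<in> strip_S" for z
    using cos_strip_pos[of z] that by (auto simp: strip_S_def)
  then show ?thesis unfolding rho_S_def[abs_def] by (intro continuous_intros) auto
qed

lemma cont_rho_U: "continuous_on unit_disc rho_U"
proof -
  have "1 - (cmod z)\<^sup>2 \<noteq> 0" if "z \<in> unit_disc" for z
  proof -
    have "(cmod z)\<^sup>2 < 1" using that by (simp add: unit_disc_def abs_square_less_1)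
    then show ?thesis by simp
  qed
  then show ?thesis unfolding rho_U_def[abs_def] by (intro continuous_intros) auto
qed

lemma rho_S_pos: "z \<in> strip_S \<Longrightarrow> rho_S z > 0"
  using cos_strip_pos[of z] by (auto simp: strip_S_def rho_S_def)

lemma curve_bound:
  assumes K: "K \<ge> 1" and f: "f \<in> HQR K unit_disc strip_S"
    and g1: "\<gamma> C1_differentiable_on {0..1}" and g2: "\<gamma> ` {0..1} \<subseteq> unit_disc"
  shows "(f \<circ> \<gamma>) C1_differentiable_on {0..1} \<and> (f \<circ> \<gamma>) ` {0..1} \<subseteq> strip_S \<and>
    integral {0..1} (\<lambda>t. rho_S ((f \<circ> \<gamma>) t) * cmod (vector_derivative (f \<circ> \<gamma>) (at t within {0..1})))
    \<le> K * integral {0..1} (\<lambda>t. rho_U (\<gamma> t) * cmod (vector_derivative \<gamma> (at t within {0..1})))"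
proof -
  have hf: "harmonic_on f unit_disc" and fS: "f ` unit_disc \<subseteq> strip_S"
    and cdx: "continuous_on unit_disc (dx f)" and cdy: "continuous_on unit_disc (dy f)"
    using f unfolding HQR_def by auto
  have fd: "f differentiable at w" if "w \<in> unit_disc" for w
    using hf that unfolding harmonic_on_def by auto
  obtain D where D: "\<And>t. t \<in> {0..1} \<Longrightarrow> (\<gamma> has_vector_derivative D t) (at t)"
    and cD: "continuous_on {0..1} D"
    using g1 unfolding C1_differentiable_on_def by blast
  have cg: "continuous_on {0..1} \<gamma>" by (rule C1_differentiable_imp_continuous_on[OF g1])
  define D2 where "D2 t = of_real (Re (D t)) * dx f (\<gamma> t) + of_real (Im (D t)) * dy f (\<gamma> t)" for t
  have dfg: "((f \<circ> \<gamma>) has_vector_derivative D2 t) (at t)" if t: "t \<in> {0..1}" for t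
  proof -
    have gt: "\<gamma> t \<in> unit_disc" using g2 t by auto
    obtain L where L: "(f has_derivative L) (at (\<gamma> t))" using fd[OF gt] unfolding differentiable_def by blast
    have "((f \<circ> \<gamma>) has_derivative (L \<circ> (\<lambda>s. s *\<^sub>R D t))) (at t)"
      using D[OF t] L unfolding has_vector_derivative_def by (rule diff_chain_at)
    moreover have "(L \<circ> (\<lambda>s. s *\<^sub>R D t)) = (\<lambda>s. s *\<^sub>R D2 t)"
    proof
      fix s
      have "L (s *\<^sub>R D t) = s *\<^sub>R L (D t)"
        using has_derivative_linear[OF L] by (simp add: linear_scale)
      then show "(L \<circ> (\<lambda>s. s *\<^sub>R D t)) s = s *\<^sub>R D2 t"
        unfolding D2_def deriv_decomp[OF L, of "D t"] by simp
    qed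
    ultimately show ?thesis unfolding has_vector_derivative_def by simp
  qed
  have g2': "\<gamma> t \<in> unit_disc" if "t \<in> {0..1}" for t using g2 that by auto
  have cD2: "continuous_on {0..1} D2"
  proof -
    have c1: "continuous_on {0..1} (\<lambda>t. dx f (\<gamma> t))"
      by (rule continuous_on_compose2[OF cdx cg]) (use g2 in auto)
    have c2: "continuous_on {0..1} (\<lambda>t. dy f (\<gamma> t))"
      by (rule continuous_on_compose2[OF cdy cg]) (use g2 in auto)
    show ?thesis unfolding D2_def[abs_def] by (intro continuous_intros c1 c2 cD)
  qed
  have C1: "(f \<circ> \<gamma>) C1_differentiable_on {0..1}"
    unfolding C1_differentiable_on_def using dfg cD2 by blast
  have img: "(f \<circ> \<gamma>) ` {0..1} \<subseteq> strip_S" using g2 fS by auto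
  have vd1: "vector_derivative (f \<circ> \<gamma>) (at t within {0..1}) = D2 t" if "t \<in> {0..1}" for t
    by (rule vector_derivative_within_closed_interval) (use that dfg[OF that] has_vector_derivative_at_within in auto)
  have vd2: "vector_derivative \<gamma> (at t within {0..1}) = D t" if "t \<in> {0..1}" for t
    by (rule vector_derivative_within_closed_interval) (use that D[OF that] has_vector_derivative_at_within in auto)
  have I1: "integral {0..1} (\<lambda>t. rho_S ((f \<circ> \<gamma>) t) * cmod (vector_derivative (f \<circ> \<gamma>) (at t within {0..1})))
     = integral {0..1} (\<lambda>t. rho_S (f (\<gamma> t)) * cmod (D2 t))"
    by (rule integral_cong) (simp add: vd1)
  have I2: "integral {0..1} (\<lambda>t. rho_U (\<gamma> t) * cmod (vector_derivative \<gamma> (at t within {0..1})))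
     = integral {0..1} (\<lambda>t. rho_U (\<gamma> t) * cmod (D t))"
    by (rule integral_cong) (simp add: vd2)
  have cfg: "continuous_on {0..1} (\<lambda>t. f (\<gamma> t))"
    using C1_differentiable_imp_continuous_on[OF C1] by (simp add: o_def)
  have int1: "(\<lambda>t. rho_S (f (\<gamma> t)) * cmod (D2 t)) integrable_on {0..1}"
  proof (rule integrable_continuous_interval)
    have "continuous_on {0..1} (\<lambda>t. rho_S (f (\<gamma> t)))"
      by (rule continuous_on_compose2[OF cont_rho_S cfg]) (use img in auto)
    then show "continuous_on {0..1} (\<lambda>t. rho_S (f (\<gamma> t)) * cmod (D2 t))"
      by (intro continuous_intros cD2)
  qed
  have int2: "(\<lambda>t. K * (rho_U (\<gamma> t) * cmod (D t))) integrable_on {0..1}"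
  proof (rule integrable_continuous_interval)
    have "continuous_on {0..1} (\<lambda>t. rho_U (\<gamma> t))"
      by (rule continuous_on_compose2[OF cont_rho_U cg]) (use g2 in auto)
    then show "continuous_on {0..1} (\<lambda>t. K * (rho_U (\<gamma> t) * cmod (D t)))"
      by (intro continuous_intros cD)
  qed
  have le: "rho_S (f (\<gamma> t)) * cmod (D2 t) \<le> K * (rho_U (\<gamma> t) * cmod (D t))" if t: "t \<in> {0..1}" for t
  proof -
    have gt: "\<gamma> t \<in> unit_disc" using g2 t by auto
    have pos: "rho_S (f (\<gamma> t)) > 0" using rho_S_pos fS gt by auto
    have "rho_S (f (\<gamma> t)) * cmod (D2 t) \<le> rho_S (f (\<gamma> t)) * ((cmod (dz f (\<gamma> t)) + cmod (dzbar f (\<gamma> t))) * cmod (D t))"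
      unfolding D2_def by (rule mult_left_mono[OF norm_lin_le]) (use pos in auto)
    also have "\<dots> = (rho_S (f (\<gamma> t)) * (cmod (dz f (\<gamma> t)) + cmod (dzbar f (\<gamma> t)))) * cmod (D t)"
      by (simp add: mult.assoc)
    also have "\<dots> \<le> (K * rho_U (\<gamma> t)) * cmod (D t)"
      by (rule mult_right_mono[OF pointwise_bound[OF K f gt]]) simp
    finally show ?thesis by (simp add: mult.assoc)
  qed
  have "integral {0..1} (\<lambda>t. rho_S (f (\<gamma> t)) * cmod (D2 t)) \<le> integral {0..1} (\<lambda>t. K * (rho_U (\<gamma> t) * cmod (D t)))"
    by (rule integral_le[OF int1 int2 le])
  also have "\<dots> = K * integral {0..1} (\<lambda>t. rho_U (\<gamma> t) * cmod (D t))" by simp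
  finally show ?thesis using C1 img I1 I2 by simp
qed

lemma seg_in:
  assumes "z1 \<in> unit_disc" "z2 \<in> unit_disc"
  shows "(\<lambda>t. z1 + of_real t * (z2 - z1)) C1_differentiable_on {0..1} \<and>
    (\<lambda>t. z1 + of_real t * (z2 - z1)) ` {0..1} \<subseteq> unit_disc"
proof
  have "((\<lambda>t. id (z1 + of_real t * (z2 - z1))) has_vector_derivative id (z2 - z1)) (at s)" for s
    by (rule dir_deriv) (unfold id_def, rule has_derivative_ident)
  then show "(\<lambda>t. z1 + of_real t * (z2 - z1)) C1_differentiable_on {0..1}"
    unfolding C1_differentiable_on_def by (intro exI[of _ "\<lambda>_. z2 - z1"]) (auto intro: continuous_on_const)
  show "(\<lambda>t. z1 + of_real t * (z2 - z1)) ` {0..1} \<subseteq> unit_disc"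
  proof
    fix w assume "w \<in> (\<lambda>t. z1 + of_real t * (z2 - z1)) ` {0..1}"
    then obtain t where t: "t \<in> {0..1::real}" and w: "w = z1 + of_real t * (z2 - z1)" by blast
    have "w = (1 - t) *\<^sub>R z1 + t *\<^sub>R z2" unfolding w by (simp add: scaleR_conv_of_real algebra_simps)
    moreover have "(1 - t) *\<^sub>R z1 + t *\<^sub>R z2 \<in> ball 0 1"
      by (rule convexD[OF convex_ball]) (use assms t unit_disc_ball in auto)
    ultimately show "w \<in> unit_disc" using unit_disc_ball by simp
  qed
qed

theorem lemma4:
  fixes K :: real and f :: "complex \<Rightarrow> complex"
  assumes "K \<ge> 1" and "f \<in> HQR K unit_disc strip_S"
  shows "\<forall>z1\<in>unit_disc. \<forall>z2\<in>unit_disc.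
           hyp_dist strip_S rho_S (f z1) (f z2) \<le> K * hyp_dist unit_disc rho_U z1 z2"
proof (intro ballI)
  fix z1 z2 assume z1: "z1 \<in> unit_disc" and z2: "z2 \<in> unit_disc"
  define SU where "SU = {\<gamma>. \<gamma> C1_differentiable_on {0..1} \<and> \<gamma> ` {0..1} \<subseteq> unit_disc \<and> \<gamma> 0 = z1 \<and> \<gamma> 1 = z2}"
  define SS where "SS = {\<gamma>. \<gamma> C1_differentiable_on {0..1} \<and> \<gamma> ` {0..1} \<subseteq> strip_S \<and> \<gamma> 0 = f z1 \<and> \<gamma> 1 = f z2}"
  define LU where "LU \<gamma> = integral {0..1} (\<lambda>t. rho_U (\<gamma> t) * cmod (vector_derivative \<gamma> (at t within {0..1})))" for \<gamma>
  define LS where "LS \<gamma> = integral {0..1} (\<lambda>t. rho_S (\<gamma> t) * cmod (vector_derivative \<gamma> (at t within {0..1})))" for \<gamma>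
  have hU: "hyp_dist unit_disc rho_U z1 z2 = (INF \<gamma>\<in>SU. LU \<gamma>)"
    unfolding hyp_dist_def SU_def LU_def ..
  have hS: "hyp_dist strip_S rho_S (f z1) (f z2) = (INF \<gamma>\<in>SS. LS \<gamma>)"
    unfolding hyp_dist_def SS_def LS_def ..
  have K0: "K > 0" using assms(1) by simp
  have ne: "SU \<noteq> {}"
  proof -
    have "(\<lambda>t. z1 + of_real t * (z2 - z1)) \<in> SU" using seg_in[OF z1 z2] by (simp add: SU_def)
    then show ?thesis by blast
  qed
  have bdd: "bdd_below (LS ` SS)"
  proof (rule bdd_belowI)
    fix y assume "y \<in> LS ` SS"
    then obtain \<eta> where \<eta>: "\<eta> \<in> SS" and y: "y = LS \<eta>" by blast
    have nn: "0 \<le> rho_S (\<eta> t) * cmod (vector_derivative \<eta> (at t within {0..1}))" if "t \<in> {0..1}" for t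
    proof -
      have "\<eta> t \<in> strip_S" using \<eta> that by (auto simp: SS_def)
      then show ?thesis using rho_S_pos by (simp add: less_imp_le)
    qed
    show "0 \<le> y"
    proof (cases "(\<lambda>t. rho_S (\<eta> t) * cmod (vector_derivative \<eta> (at t within {0..1}))) integrable_on {0..1}")
      case True then show ?thesis unfolding y LS_def by (rule integral_nonneg) (use nn in auto)
    next
      case False then show ?thesis unfolding y LS_def by (simp add: not_integrable_integral)
    qed
  qed
  have "hyp_dist strip_S rho_S (f z1) (f z2) / K \<le> LU \<gamma>" if g: "\<gamma> \<in> SU" for \<gamma>
  proof -
    have g1: "\<gamma> C1_differentiable_on {0..1}" "\<gamma> ` {0..1} \<subseteq> unit_disc" "\<gamma> 0 = z1" "\<gamma> 1 = z2"
      using g by (auto simp: SU_def)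
    note cb = curve_bound[OF assms g1(1,2)]
    have "f \<circ> \<gamma> \<in> SS" using cb g1 by (simp add: SS_def)
    then have "hyp_dist strip_S rho_S (f z1) (f z2) \<le> LS (f \<circ> \<gamma>)"
      unfolding hS by (rule cINF_lower[OF bdd])
    also have "\<dots> \<le> K * LU \<gamma>" using cb unfolding LS_def LU_def by simp
    finally show ?thesis using K0 by (simp add: divide_le_eq mult.commute)
  qed
  then have "hyp_dist strip_S rho_S (f z1) (f z2) / K \<le> (INF \<gamma>\<in>SU. LU \<gamma>)"
    by (intro cINF_greatest[OF ne])
  then show "hyp_dist strip_S rho_S (f z1) (f z2) \<le> K * hyp_dist unit_disc rho_U z1 z2"
    unfolding hU using K0 by (simp add: divide_le_eq mult.commute)
qed

end
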